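(* Let $k,\ell\in\mathbb{N}$ and let $V$ be a finite set with $|V|\ge 2k\ge 2\ell$. For any function $f\colon\binom{V}{k}\to\mathbb{R}$, the following are equivalent: (i) $W^k(f)=W^{k-1}(f)=\cdots=W^{\ell}(f)=0$; (ii) there exists a unique function $h\colon\binom{V}{\ell-1}\to\mathbb{R}$ such that for all $R\in\binom{V}{k}$, $f(R)=\sum_{S\subset R,\,|S|=\ell-1}h(S)$.
   Context: $\binom{X}{k}$ denotes the family of $k$-element subsets of $X$. An $s$-permutation of $V$ is a sequence of $s$ distinct elements of $V$. For $k,r\in\mathbb{N}$, a finite set $V$ with $|V|\ge 2k\ge 2r$ and $f\colon\binom{V}{k}\to\mathbb{R}$, the level-$r$ weight of $f$ is \[ W^r(f)=\left(\mathbb{E}_{(a_1,b_1,\ldots,a_r,b_r)}\Big(\mathbb{E}_{R}\,(-1)^{|R\cap\{b_1,\ldots,b_r\}|}f(R)\Big)^2\right)^{1/2}, \] where $(a_1,b_1,\ldots,a_r,b_r)$ is a uniformly random $2r$-permutation of $V$, and, given it, $R$ is a uniformly random $k$-subset of $V$ with $|R\cap\{a_i,b_i\}|=1$ for each $i\in[r]$. *)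

theory Defs
  imports Complex_Main "HOL-Library.FuncSet"
begin

text \<open>The 2r-permutations of V: lists (a_1,b_1,...,a_r,b_r) of 2r distinct elements of V.
  We index from 0: a_i = xs!(2i), b_i = xs!(2i+1) for i < r.\<close>
definition perms2 :: "'a set \<Rightarrow> nat \<Rightarrow> 'a list set" where
  "perms2 V r = {xs. distinct xs \<and> length xs = 2 * r \<and> set xs \<subseteq> V}"

definition bset :: "nat \<Rightarrow> 'a list \<Rightarrow> 'a set" where
  "bset r xs = {xs ! (2 * i + 1) | i. i < r}"

definition admissible :: "'a set \<Rightarrow> nat \<Rightarrow> nat \<Rightarrow> 'a list \<Rightarrow> 'a set set" where
  "admissible V k r xs = {R. R \<subseteq> V \<and> card R = k \<and>
      (\<forall>i<r. card (R \<inter> {xs ! (2 * i), xs ! (2 * i + 1)}) = 1)}"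

definition inner_exp :: "'a set \<Rightarrow> nat \<Rightarrow> nat \<Rightarrow> ('a set \<Rightarrow> real) \<Rightarrow> 'a list \<Rightarrow> real" where
  "inner_exp V k r f xs =
     (\<Sum>R\<in>admissible V k r xs. (-1) ^ card (R \<inter> bset r xs) * f R) / real (card (admissible V k r xs))"

definition level_weight :: "'a set \<Rightarrow> nat \<Rightarrow> nat \<Rightarrow> ('a set \<Rightarrow> real) \<Rightarrow> real" where
  "level_weight V k r f =
     sqrt ((\<Sum>xs\<in>perms2 V r. (inner_exp V k r f xs)\<^sup>2) / real (card (perms2 V r)))"

end

theory Submission
  imports Defs
begin


definition sgn_sum :: "'a set \<Rightarrow> nat \<Rightarrow> nat \<Rightarrow> ('a set \<Rightarrow> real) \<Rightarrow> 'a list \<Rightarrow> real" where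
  "sgn_sum V k r f xs = (\<Sum>R\<in>admissible V k r xs. (-1) ^ card (R \<inter> bset r xs) * f R)"

lemma fin_perms2: "finite V \<Longrightarrow> finite (perms2 V r)"
proof -
  assume "finite V"
  have "perms2 V r \<subseteq> {xs. set xs \<subseteq> V \<and> length xs = 2*r}" unfolding perms2_def by auto
  moreover have "finite {xs. set xs \<subseteq> V \<and> length xs = 2*r}"
    using finite_lists_length_eq \<open>finite V\<close> by blast
  ultimately show ?thesis by (rule finite_subset)
qed

lemma fin_adm: "finite V \<Longrightarrow> finite (admissible V k r xs)"
  by (rule finite_subset[of _ "Pow V"]) (auto simp: admissible_def)

lemma lw0:
  assumes "finite V"
  shows "level_weight V k r f = 0 \<longleftrightarrow> (\<forall>xs\<in>perms2 V r. sgn_sum V k r f xs = 0)"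
proof
  assume h: "\<forall>xs\<in>perms2 V r. sgn_sum V k r f xs = 0"
  hence "\<forall>xs\<in>perms2 V r. inner_exp V k r f xs = 0"
    unfolding inner_exp_def sgn_sum_def by simp
  thus "level_weight V k r f = 0" unfolding level_weight_def by simp
next
  assume h: "level_weight V k r f = 0"
  show "\<forall>xs\<in>perms2 V r. sgn_sum V k r f xs = 0"
  proof
    fix xs assume xs: "xs \<in> perms2 V r"
    have fin: "finite (perms2 V r)" using fin_perms2 assms by blast
    hence cpos: "card (perms2 V r) > 0" using xs card_gt_0_iff by blast
    have "(\<Sum>xs\<in>perms2 V r. (inner_exp V k r f xs)\<^sup>2) / real (card (perms2 V r)) = 0"
      using h unfolding level_weight_def by simp
    hence "(\<Sum>xs\<in>perms2 V r. (inner_exp V k r f xs)\<^sup>2) = 0" using cpos by simp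
    hence "\<forall>ys\<in>perms2 V r. (inner_exp V k r f ys)\<^sup>2 = 0"
      using sum_nonneg_eq_0_iff[OF fin] by (simp add: sum_nonneg_eq_0_iff[OF fin])
    hence ie: "inner_exp V k r f xs = 0" using xs by simp
    show "sgn_sum V k r f xs = 0"
    proof (cases "card (admissible V k r xs) = 0")
      case True
      hence "admissible V k r xs = {}" using fin_adm[OF assms] by auto
      thus ?thesis unfolding sgn_sum_def by simp
    next
      case False
      thus ?thesis using ie unfolding inner_exp_def sgn_sum_def by simp
    qed
  qed
qed

lemma idx_inj:
  assumes "distinct xs" "length xs = 2*r" "p < 2*r" "q < 2*r"
  shows "xs!p = xs!q \<longleftrightarrow> p = q"
  using assms nth_eq_iff_index_eq[of xs p q] by auto

lemma set_pairs:
  assumes "length xs = 2*r" "x \<in> set xs"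
  shows "\<exists>i<r. x = xs!(2*i) \<or> x = xs!(2*i+1)"
proof -
  obtain p where p: "p < 2*r" "x = xs!p" using assms by (auto simp: in_set_conv_nth)
  show ?thesis
  proof (cases "even p")
    case True
    then obtain i where "p = 2*i" by blast
    thus ?thesis using p by auto
  next
    case False
    then obtain i where "p = 2*i+1" using oddE by blast
    have "i < r" using p \<open>p = 2*i+1\<close> by linarith
    thus ?thesis using p \<open>p = 2*i+1\<close> by blast
  qed
qed

lemma bset_sub: "length xs = 2*r \<Longrightarrow> bset r xs \<subseteq> set xs"
  unfolding bset_def by auto

lemma a_notin_bset:
  assumes "distinct xs" "length xs = 2*r" "i < r"
  shows "xs!(2*i) \<notin> bset r xs"
proof
  assume "xs!(2*i) \<in> bset r xs"
  then obtain i' where "i' < r" "xs!(2*i) = xs!(2*i'+1)" unfolding bset_def by auto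
  hence "2*i = 2*i'+1" using idx_inj[OF assms(1,2)] assms(3) by simp
  thus False by presburger
qed

lemma b_in_bset: "i < r \<Longrightarrow> xs!(2*i+1) \<in> bset r xs"
  unfolding bset_def by auto

lemma pair_disj:
  assumes "distinct xs" "length xs = 2*r" "i < r" "i' < r" "i \<noteq> i'"
  shows "{xs!(2*i), xs!(2*i+1)} \<inter> {xs!(2*i'), xs!(2*i'+1)} = {}"
proof -
  have "2*i \<noteq> 2*i'" "2*i \<noteq> 2*i'+1" "2*i+1 \<noteq> 2*i'" "2*i+1 \<noteq> 2*i'+1"
    using assms(5) by presburger+
  thus ?thesis using idx_inj[OF assms(1,2)] assms(3,4) by auto
qed

lemma pair_ne:
  assumes "distinct xs" "length xs = 2*r" "i < r"
  shows "xs!(2*i) \<noteq> xs!(2*i+1)"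
  using idx_inj[OF assms(1,2)] assms(3) by simp



lemma swap_adm:
  assumes V: "finite V" and xs: "xs \<in> perms2 V r" and i: "i < r"
    and xy: "{x, y} = {xs!(2*i), xs!(2*i+1)}" "x \<noteq> y"
    and R: "R \<in> admissible V k r xs" "x \<in> R" "y \<notin> R"
  shows "insert y (R - {x}) \<in> admissible V k r xs"
    and "(-1::real) ^ card (insert y (R - {x}) \<inter> bset r xs) = - ((-1) ^ card (R \<inter> bset r xs))"
proof -
  have d: "distinct xs" and l: "length xs = 2*r" and sV: "set xs \<subseteq> V"
    using xs unfolding perms2_def by auto
  have RV: "R \<subseteq> V" and cR: "card R = k"
    and pc: "\<forall>i'<r. card (R \<inter> {xs ! (2 * i'), xs ! (2 * i' + 1)}) = 1"
    using R(1) unfolding admissible_def by auto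
  have finR: "finite R" using RV V finite_subset by blast
  have "xs!(2*i) \<in> set xs" "xs!(2*i+1) \<in> set xs" using l i by simp_all
  moreover have "y \<in> {xs!(2*i), xs!(2*i+1)}" using xy(1) by (metis insertCI)
  ultimately have yV: "y \<in> V" using sV by blast
  let ?R' = "insert y (R - {x})"
  have "card (R - {x}) = k - 1" using finR R(2) cR by simp
  moreover have "k \<ge> 1" using finR R(2) cR card_0_eq by fastforce
  ultimately have "card ?R' = k" using finR R(3) by simp
  moreover have "?R' \<subseteq> V" using RV yV by auto
  moreover have "\<forall>i'<r. card (?R' \<inter> {xs ! (2 * i'), xs ! (2 * i' + 1)}) = 1"
  proof (intro allI impI)
    fix i' assume i': "i' < r"
    show "card (?R' \<inter> {xs ! (2 * i'), xs ! (2 * i' + 1)}) = 1"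
    proof (cases "i' = i")
      case True
      have "?R' \<inter> {xs ! (2 * i'), xs ! (2 * i' + 1)} = {y}"
        using True xy R(3) by auto
      thus ?thesis by simp
    next
      case False
      have "{x,y} \<inter> {xs ! (2 * i'), xs ! (2 * i' + 1)} = {}"
        using pair_disj[OF d l i i' ] False xy(1) by auto
      hence "?R' \<inter> {xs ! (2 * i'), xs ! (2 * i' + 1)} = R \<inter> {xs ! (2 * i'), xs ! (2 * i' + 1)}"
        by auto
      thus ?thesis using pc i' by simp
    qed
  qed
  ultimately show "?R' \<in> admissible V k r xs" unfolding admissible_def by blast
  have aB: "xs!(2*i) \<notin> bset r xs" using a_notin_bset[OF d l i] .
  have bB: "xs!(2*i+1) \<in> bset r xs" using b_in_bset[OF i] .
  have finB: "finite (R \<inter> bset r xs)" using finR by simp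
  show "(-1::real) ^ card (?R' \<inter> bset r xs) = - ((-1) ^ card (R \<inter> bset r xs))"
  proof (cases "x = xs!(2*i)")
    case True
    hence yb: "y = xs!(2*i+1)" using xy by (metis doubleton_eq_iff)
    have "?R' \<inter> bset r xs = insert y (R \<inter> bset r xs)" using True yb aB bB by auto
    moreover have "y \<notin> R \<inter> bset r xs" using R(3) by simp
    ultimately show ?thesis using finB by simp
  next
    case False
    hence xb: "x = xs!(2*i+1)" and ya: "y = xs!(2*i)" using xy by (metis doubleton_eq_iff)+
    have e: "R \<inter> bset r xs = insert x (?R' \<inter> bset r xs)" using xb ya aB bB R(2) by auto
    have "x \<notin> ?R' \<inter> bset r xs" using xy(2) by simp
    moreover have "finite (?R' \<inter> bset r xs)" using finR by simp
    ultimately show ?thesis using e by simp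
  qed
qed

lemma inv_zero:
  assumes V: "finite V" and xs: "xs \<in> perms2 V r" and i: "i < r"
    and S: "xs!(2*i) \<notin> S" "xs!(2*i+1) \<notin> S"
  shows "(\<Sum>R\<in>{R\<in>admissible V k r xs. S \<subseteq> R}. (-1::real) ^ card (R \<inter> bset r xs)) = 0"
proof -
  have d: "distinct xs" and l: "length xs = 2*r"
    using xs unfolding perms2_def by auto
  define a where "a = xs!(2*i)"
  define b where "b = xs!(2*i+1)"
  have ab: "a \<noteq> b" using pair_ne[OF d l i] a_def b_def by simp
  define A where "A = {R\<in>admissible V k r xs. S \<subseteq> R}"
  define \<sigma> where "\<sigma> R = (if a \<in> R then insert b (R - {a}) else insert a (R - {b}))" for R
  define s where "s R = (-1::real) ^ card (R \<inter> bset r xs)" for R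
  have one: "card (R \<inter> {a, b}) = 1" if "R \<in> A" for R
    using that i unfolding A_def admissible_def a_def b_def by auto
  have ex: "(a \<in> R \<and> b \<notin> R) \<or> (b \<in> R \<and> a \<notin> R)" if "R \<in> A" for R
  proof -
    have "card (R \<inter> {a, b}) = 1" using one that .
    thus ?thesis using ab by (cases "a \<in> R"; cases "b \<in> R") auto
  qed
  have main: "\<sigma> R \<in> A \<and> s (\<sigma> R) = - s R \<and> \<sigma> (\<sigma> R) = R" if R: "R \<in> A" for R
  proof (cases "a \<in> R")
    case True
    hence bR: "b \<notin> R" using ex[OF R] by blast
    have Ra: "R \<in> admissible V k r xs" using R A_def by simp
    have 1: "\<sigma> R = insert b (R - {a})" using True \<sigma>_def by simp
    have "{a, b} = {xs!(2*i), xs!(2*i+1)}" using a_def b_def by simp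
    note sw = swap_adm[OF V xs i this ab Ra True bR]
    have "\<sigma> (\<sigma> R) = R" using 1 True bR ab \<sigma>_def by auto
    moreover have "S \<subseteq> \<sigma> R" using R S 1 unfolding A_def a_def by auto
    ultimately show ?thesis using sw 1 unfolding A_def s_def by simp
  next
    case False
    hence bR: "b \<in> R" using ex[OF R] by blast
    have Ra: "R \<in> admissible V k r xs" using R A_def by simp
    have 1: "\<sigma> R = insert a (R - {b})" using False \<sigma>_def by simp
    have "{b, a} = {xs!(2*i), xs!(2*i+1)}" using a_def b_def by auto
    note sw = swap_adm[OF V xs i this ab[symmetric] Ra bR False]
    have "\<sigma> (\<sigma> R) = R" using 1 False bR ab \<sigma>_def by auto
    moreover have "S \<subseteq> \<sigma> R" using R S 1 unfolding A_def b_def by auto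
    ultimately show ?thesis using sw 1 unfolding A_def s_def by simp
  qed
  have bij: "bij_betw \<sigma> A A"
    by (rule bij_betw_byWitness[where f'=\<sigma>]) (use main in auto)
  have "sum s A = sum (s \<circ> \<sigma>) A" using sum.reindex_bij_betw[OF bij, of s] by simp
  also have "\<dots> = sum (\<lambda>R. - s R) A" using main by (intro sum.cong) auto
  also have "\<dots> = - sum s A" by (simp add: sum_negf)
  finally have "sum s A = 0" by simp
  thus ?thesis unfolding A_def s_def .
qed



definition upm :: "int \<Rightarrow> ('a set \<Rightarrow> real) \<Rightarrow> 'a set \<Rightarrow> real" where
  "upm d g S = (\<Sum>U\<in>{U. U \<subseteq> S \<and> int (card U) = d}. g U)"

lemma pick:
  assumes d: "distinct xs" and l: "length xs = 2*r" and S: "finite S"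
    and ne: "\<forall>i<r. S \<inter> {xs!(2*i), xs!(2*i+1)} \<noteq> {}"
  shows "r \<le> card (S \<inter> set xs)"
proof -
  define p where "p i = (SOME x. x \<in> S \<inter> {xs!(2*i), xs!(2*i+1)})" for i
  have pin: "p i \<in> S \<inter> {xs!(2*i), xs!(2*i+1)}" if "i < r" for i
    using ne that unfolding p_def by (metis some_in_eq)
  have "inj_on p {..<r}"
  proof (rule inj_onI)
    fix i i' assume "i \<in> {..<r}" "i' \<in> {..<r}" "p i = p i'"
    thus "i = i'" using pin pair_disj[OF d l, of i i'] by (metis Int_iff empty_iff lessThan_iff)
  qed
  moreover have "p ` {..<r} \<subseteq> S \<inter> set xs"
  proof
    fix x assume "x \<in> p ` {..<r}"
    then obtain i where i: "i < r" "x = p i" by auto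
    have "xs!(2*i) \<in> set xs" "xs!(2*i+1) \<in> set xs" using l i by simp_all
    thus "x \<in> S \<inter> set xs" using pin[OF i(1)] i(2) by auto
  qed
  ultimately show ?thesis using card_inj_on_le[of p "{..<r}" "S \<inter> set xs"] S by simp
qed

lemma miss_pair:
  assumes "xs \<in> perms2 V r" "finite S" "card S < r"
  shows "\<exists>i<r. xs!(2*i) \<notin> S \<and> xs!(2*i+1) \<notin> S"
proof (rule ccontr)
  assume "\<not> ?thesis"
  hence "\<forall>i<r. S \<inter> {xs!(2*i), xs!(2*i+1)} \<noteq> {}" by auto
  hence "r \<le> card (S \<inter> set xs)" using pick assms unfolding perms2_def by blast
  moreover have "card (S \<inter> set xs) \<le> card S" using assms(2) by (simp add: card_mono)
  ultimately show False using assms(3) by simp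
qed

lemma orth:
  assumes V: "finite V" and xs: "xs \<in> perms2 V r" and dr: "d < int r"
  shows "(\<Sum>R\<in>admissible V k r xs. (-1::real) ^ card (R \<inter> bset r xs) * upm d g R) = 0"
proof -
  define B where "B = {U. U \<subseteq> V \<and> int (card U) = d}"
  define A where "A = admissible V k r xs"
  have finB: "finite B" unfolding B_def using V by simp
  have finA: "finite A" unfolding A_def using fin_adm V by blast
  have "(\<Sum>R\<in>A. (-1::real) ^ card (R \<inter> bset r xs) * upm d g R)
      = (\<Sum>R\<in>A. \<Sum>U\<in>{U\<in>B. U \<subseteq> R}. (-1::real) ^ card (R \<inter> bset r xs) * g U)"
  proof (rule sum.cong[OF refl])
    fix R assume "R \<in> A"
    hence "R \<subseteq> V" unfolding A_def admissible_def by auto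
    hence "{U. U \<subseteq> R \<and> int (card U) = d} = {U\<in>B. U \<subseteq> R}" unfolding B_def by auto
    thus "(-1::real) ^ card (R \<inter> bset r xs) * upm d g R
        = (\<Sum>U\<in>{U\<in>B. U \<subseteq> R}. (-1::real) ^ card (R \<inter> bset r xs) * g U)"
      unfolding upm_def by (simp add: sum_distrib_left)
  qed
  also have "\<dots> = (\<Sum>U\<in>B. \<Sum>R | R \<in> A \<and> U \<subseteq> R. (-1::real) ^ card (R \<inter> bset r xs) * g U)"
    by (rule sum.swap_restrict[OF finA finB])
  also have "\<dots> = (\<Sum>U\<in>B. g U * (\<Sum>R | R \<in> A \<and> U \<subseteq> R. (-1::real) ^ card (R \<inter> bset r xs)))"
    by (simp add: sum_distrib_left mult.commute)
  also have "\<dots> = 0"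
  proof (rule sum.neutral, rule ballI)
    fix U assume U: "U \<in> B"
    hence fU: "finite U" unfolding B_def using V finite_subset by blast
    have "card U < r" using U dr unfolding B_def by simp
    then obtain i where i: "i < r" "xs!(2*i) \<notin> U" "xs!(2*i+1) \<notin> U"
      using miss_pair[OF xs fU] by blast
    have "{R. R \<in> A \<and> U \<subseteq> R} = {R\<in>admissible V k r xs. U \<subseteq> R}" unfolding A_def by simp
    thus "g U * (\<Sum>R | R \<in> A \<and> U \<subseteq> R. (-1::real) ^ card (R \<inter> bset r xs)) = 0"
      using inv_zero[OF V xs i] by simp
  qed
  finally show ?thesis unfolding A_def .
qed



definition chi :: "nat \<Rightarrow> 'a list \<Rightarrow> 'a set \<Rightarrow> real" where
  "chi j xs S = (if card S = j \<and> (\<forall>i<j. card (S \<inter> {xs!(2*i), xs!(2*i+1)}) = 1)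
      then (-1) ^ card (S \<inter> bset j xs) else 0)"

lemma chi_adm: "S \<subseteq> V \<Longrightarrow> chi j xs S = (if S \<in> admissible V j j xs then (-1) ^ card (S \<inter> bset j xs) else 0)"
  unfolding chi_def admissible_def by auto

lemma bset_cons: "bset (Suc j) (a#b#xs) = insert b (bset j xs)"
proof -
  have "bset (Suc j) (a#b#xs) = {(a#b#xs) ! (2 * i + 1) |i. i < Suc j}" unfolding bset_def ..
  also have "\<dots> = insert b {xs ! (2 * i + 1) |i. i < j}"
  proof (rule set_eqI, rule iffI)
    fix x assume "x \<in> {(a#b#xs) ! (2 * i + 1) |i. i < Suc j}"
    then obtain i where i: "i < Suc j" "x = (a#b#xs) ! (2 * i + 1)" by blast
    show "x \<in> insert b {xs ! (2 * i + 1) |i. i < j}"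
    proof (cases i)
      case 0 thus ?thesis using i by simp
    next
      case (Suc i') thus ?thesis using i by auto
    qed
  next
    fix x assume x: "x \<in> insert b {xs ! (2 * i + 1) |i. i < j}"
    show "x \<in> {(a#b#xs) ! (2 * i + 1) |i. i < Suc j}"
    proof (cases "x = b")
      case True
      hence "x = (a#b#xs) ! (2 * 0 + 1)" by simp
      thus ?thesis by blast
    next
      case False
      then obtain i where i: "i < j" "x = xs ! (2 * i + 1)" using x by blast
      hence "x = (a#b#xs) ! (2 * Suc i + 1)" by simp
      moreover have "Suc i < Suc j" using i by simp
      ultimately show ?thesis by blast
    qed
  qed
  finally show ?thesis unfolding bset_def .
qed

lemma all_less_Suc_split: "(\<forall>i<Suc n. P i) \<longleftrightarrow> P 0 \<and> (\<forall>i<n. P (Suc i))"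
  using less_Suc_eq_0_disj by auto

lemma chi_cons:
  assumes ab: "a \<noteq> b" and d: "distinct xs" and l: "length xs = 2*j"
    and na: "a \<notin> set xs" and nb: "b \<notin> set xs" and S: "finite S"
  shows "a \<in> S \<Longrightarrow> b \<notin> S \<Longrightarrow> chi (Suc j) (a#b#xs) S = chi j xs (S - {a})"
    and "b \<in> S \<Longrightarrow> a \<notin> S \<Longrightarrow> chi (Suc j) (a#b#xs) S = - chi j xs (S - {b})"
    and "(a \<in> S \<longleftrightarrow> b \<in> S) \<Longrightarrow> chi (Suc j) (a#b#xs) S = 0"
proof -
  have pr: "\<forall>i<j. xs!(2*i) \<in> set xs \<and> xs!(2*i+1) \<in> set xs" using l by simp
  have bs: "bset j xs \<subseteq> set xs" using bset_sub[OF l] .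
  have cond: "(\<forall>i<Suc j. card (S \<inter> {(a#b#xs)!(2*i), (a#b#xs)!(2*i+1)}) = 1) \<longleftrightarrow>
     card (S \<inter> {a, b}) = 1 \<and> (\<forall>i<j. card (S \<inter> {xs!(2*i), xs!(2*i+1)}) = 1)"
    unfolding all_less_Suc_split by simp
  {
    assume aS: "a \<in> S" and bS: "b \<notin> S"
    have c1: "card (S \<inter> {a, b}) = 1" using aS bS by (simp add: Int_insert_right)
    have e1: "S \<inter> {xs!(2*i), xs!(2*i+1)} = (S - {a}) \<inter> {xs!(2*i), xs!(2*i+1)}" if "i < j" for i
      using pr that na by auto
    have e2: "S \<inter> insert b (bset j xs) = (S - {a}) \<inter> bset j xs" using bS bs na by auto
    have e3: "card S = Suc j \<longleftrightarrow> card (S - {a}) = j" using S aS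
      by (metis card_Diff_singleton card_Suc_Diff1 diff_Suc_1)
    show "chi (Suc j) (a#b#xs) S = chi j xs (S - {a})"
      unfolding chi_def cond bset_cons using c1 e1 e2 e3 by simp
  }
  {
    assume bS: "b \<in> S" and aS: "a \<notin> S"
    have c1: "card (S \<inter> {a, b}) = 1" using aS bS by (simp add: Int_insert_right)
    have e1: "S \<inter> {xs!(2*i), xs!(2*i+1)} = (S - {b}) \<inter> {xs!(2*i), xs!(2*i+1)}" if "i < j" for i
      using pr that nb by auto
    have e2: "S \<inter> insert b (bset j xs) = insert b ((S - {b}) \<inter> bset j xs)" using bS by auto
    have e2': "card (S \<inter> insert b (bset j xs)) = Suc (card ((S - {b}) \<inter> bset j xs))"
      unfolding e2 using S nb bs by (subst card_insert_disjoint) auto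
    have e3: "card S = Suc j \<longleftrightarrow> card (S - {b}) = j" using S bS
      by (metis card_Diff_singleton card_Suc_Diff1 diff_Suc_1)
    show "chi (Suc j) (a#b#xs) S = - chi j xs (S - {b})"
      unfolding chi_def cond bset_cons using c1 e1 e2' e3 by simp
  }
  {
    assume "a \<in> S \<longleftrightarrow> b \<in> S"
    hence "card (S \<inter> {a, b}) \<noteq> 1" using ab by (cases "a \<in> S") (auto simp: Int_insert_right)
    thus "chi (Suc j) (a#b#xs) S = 0" unfolding chi_def cond by simp
  }
qed



lemma upm_add: "upm d (\<lambda>U. g1 U + g2 U) S = upm d g1 S + upm d g2 S"
  unfolding upm_def by (simp add: sum.distrib)
lemma upm_diff: "upm d (\<lambda>U. g1 U - g2 U) S = upm d g1 S - upm d g2 S"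
  unfolding upm_def by (simp add: sum_subtractf)
lemma upm_mult: "upm d (\<lambda>U. c * g U) S = c * upm d g S"
  unfolding upm_def by (simp add: sum_distrib_left)
lemma upm_zero: "upm d (\<lambda>U. 0) S = 0"
  unfolding upm_def by simp

definition MM :: "'a set \<Rightarrow> nat \<Rightarrow> ('a set \<Rightarrow> real) \<Rightarrow> bool" where
  "MM V j \<phi> \<longleftrightarrow> (\<exists>g L. (\<forall>p\<in>set L. fst p \<in> perms2 V j) \<and>
     (\<forall>S. S \<subseteq> V \<and> card S = j \<longrightarrow> \<phi> S = upm (int j - 1) g S + (\<Sum>p\<leftarrow>L. snd p * chi j (fst p) S)))"

lemma MM_cong: "MM V j \<phi> \<Longrightarrow> (\<And>S. S \<subseteq> V \<Longrightarrow> card S = j \<Longrightarrow> \<psi> S = \<phi> S) \<Longrightarrow> MM V j \<psi>"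
  unfolding MM_def by metis

lemma MM_add:
  assumes "MM V j \<phi>1" "MM V j \<phi>2" shows "MM V j (\<lambda>S. \<phi>1 S + \<phi>2 S)"
proof -
  obtain g1 L1 where 1: "\<forall>p\<in>set L1. fst p \<in> perms2 V j"
     "\<forall>S. S \<subseteq> V \<and> card S = j \<longrightarrow> \<phi>1 S = upm (int j - 1) g1 S + (\<Sum>p\<leftarrow>L1. snd p * chi j (fst p) S)"
    using assms(1) unfolding MM_def by blast
  obtain g2 L2 where 2: "\<forall>p\<in>set L2. fst p \<in> perms2 V j"
     "\<forall>S. S \<subseteq> V \<and> card S = j \<longrightarrow> \<phi>2 S = upm (int j - 1) g2 S + (\<Sum>p\<leftarrow>L2. snd p * chi j (fst p) S)"
    using assms(2) unfolding MM_def by blast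
  show ?thesis unfolding MM_def
    by (rule exI[of _ "\<lambda>U. g1 U + g2 U"], rule exI[of _ "L1 @ L2"]) (use 1 2 in \<open>auto simp: upm_add\<close>)
qed

lemma MM_smult:
  assumes "MM V j \<phi>" shows "MM V j (\<lambda>S. c * \<phi> S)"
proof -
  obtain g L where 1: "\<forall>p\<in>set L. fst p \<in> perms2 V j"
     "\<forall>S. S \<subseteq> V \<and> card S = j \<longrightarrow> \<phi> S = upm (int j - 1) g S + (\<Sum>p\<leftarrow>L. snd p * chi j (fst p) S)"
    using assms(1) unfolding MM_def by blast
  have e: "(\<Sum>p\<leftarrow>map (\<lambda>p. (fst p, c * snd p)) L. snd p * chi j (fst p) S)
     = c * (\<Sum>p\<leftarrow>L. snd p * chi j (fst p) S)" for S
    by (induction L) (auto simp: algebra_simps)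
  show ?thesis unfolding MM_def
    by (rule exI[of _ "\<lambda>U. c * g U"], rule exI[of _ "map (\<lambda>p. (fst p, c * snd p)) L"])
      (use 1 e in \<open>auto simp: upm_mult algebra_simps\<close>)
qed

lemma MM_zero: "MM V j (\<lambda>S. 0)"
  unfolding MM_def by (rule exI[of _ "\<lambda>U. 0"], rule exI[of _ "[]"]) (simp add: upm_zero)

lemma MM_upm: "MM V j (upm (int j - 1) g)"
  unfolding MM_def by (rule exI[of _ g], rule exI[of _ "[]"]) simp

lemma MM_sum: "finite A \<Longrightarrow> (\<And>z. z \<in> A \<Longrightarrow> MM V j (F z)) \<Longrightarrow> MM V j (\<lambda>S. \<Sum>z\<in>A. F z S)"
proof (induction A rule: finite_induct)
  case empty thus ?case using MM_zero by simp
next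
  case (insert x A)
  have "MM V j (\<lambda>S. F x S + (\<Sum>z\<in>A. F z S))" using insert by (intro MM_add) auto
  thus ?case using insert by simp
qed

lemma MM_diff: "MM V j \<phi>1 \<Longrightarrow> MM V j \<phi>2 \<Longrightarrow> MM V j (\<lambda>S. \<phi>1 S - \<phi>2 S)"
  using MM_add[of V j \<phi>1 "\<lambda>S. (-1) * \<phi>2 S"] MM_smult[of V j \<phi>2 "-1"] by simp



lemma lift:
  assumes S: "finite S" and ab: "a \<noteq> b"
  shows "upm (d + 1) (\<lambda>W. if a \<in> W \<and> b \<notin> W then G (W - {a}) else 0) S
       = (if a \<in> S then upm d G (S - {a, b}) else 0)"
proof (cases "a \<in> S")
  case False
  have "\<forall>W\<in>{W. W \<subseteq> S \<and> int (card W) = d + 1}. (if a \<in> W \<and> b \<notin> W then G (W - {a}) else 0) = 0"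
    using False by auto
  thus ?thesis unfolding upm_def using False by (simp add: sum.neutral)
next
  case True
  define A where "A = {W. W \<subseteq> S \<and> int (card W) = d + 1}"
  define X where "X = {X. X \<subseteq> S - {a, b} \<and> int (card X) = d}"
  have finA: "finite A" unfolding A_def using S by simp
  have "upm (d + 1) (\<lambda>W. if a \<in> W \<and> b \<notin> W then G (W - {a}) else 0) S
      = (\<Sum>W\<in>{W\<in>A. a \<in> W \<and> b \<notin> W}. G (W - {a}))"
    unfolding upm_def A_def[symmetric] using sum.inter_filter[OF finA, symmetric] by simp
  also have "{W\<in>A. a \<in> W \<and> b \<notin> W} = insert a ` X"
  proof (rule set_eqI, rule iffI)
    fix W assume W: "W \<in> {W\<in>A. a \<in> W \<and> b \<notin> W}"
    hence fW: "finite W" unfolding A_def using S finite_subset by blast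
    have "card W > 0" using fW W card_gt_0_iff by auto
    hence "int (card (W - {a})) = int (card W) - 1" using W fW by (simp add: of_nat_diff)
    hence "W - {a} \<in> X" using W fW unfolding A_def X_def by auto
    moreover have "W = insert a (W - {a})" using W by auto
    ultimately show "W \<in> insert a ` X" by blast
  next
    fix W assume "W \<in> insert a ` X"
    then obtain Y where Y: "Y \<in> X" "W = insert a Y" by blast
    have fY: "finite Y" using Y S unfolding X_def using finite_subset by blast
    have "a \<notin> Y" "b \<notin> Y" using Y unfolding X_def by auto
    thus "W \<in> {W\<in>A. a \<in> W \<and> b \<notin> W}" using Y fY True ab unfolding A_def X_def by auto
  qed
  also have "(\<Sum>W\<in>insert a ` X. G (W - {a})) = (\<Sum>Y\<in>X. G (insert a Y - {a}))"
  proof (rule sum.reindex[unfolded comp_def])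
    show "inj_on (insert a) X" unfolding X_def inj_on_def by blast
  qed
  also have "\<dots> = (\<Sum>Y\<in>X. G Y)"
  proof (rule sum.cong[OF refl])
    fix Y assume "Y \<in> X"
    hence "a \<notin> Y" unfolding X_def by auto
    thus "G (insert a Y - {a}) = G Y" by simp
  qed
  finally show ?thesis using True unfolding upm_def X_def by simp
qed

lemma sum_list_neg: "(\<Sum>p\<leftarrow>L. - (f p::real)) = - (\<Sum>p\<leftarrow>L. f p)"
  by (induction L) auto

lemma step1:
  assumes V: "finite V" and ab: "a \<noteq> b" "a \<in> V" "b \<in> V" and T: "T \<subseteq> V - {a, b}"
    and IH: "MM (V - {a, b}) j (\<lambda>S. if S = T then 1 else 0)"
  shows "MM V (Suc j) (\<lambda>S. (if S = insert a T then 1 else 0) - (if S = insert b T then 1 else 0))"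
proof -
  let ?V' = "V - {a, b}"
  obtain g L where L: "\<forall>p\<in>set L. fst p \<in> perms2 ?V' j"
     and e: "\<forall>S. S \<subseteq> ?V' \<and> card S = j \<longrightarrow> (if S = T then 1 else 0) = upm (int j - 1) g S + (\<Sum>p\<leftarrow>L. snd p * chi j (fst p) S)"
    using IH unfolding MM_def by blast
  define g2 where "g2 W = (if a \<in> W \<and> b \<notin> W then g (W - {a}) else 0) - (if b \<in> W \<and> a \<notin> W then g (W - {b}) else 0)" for W
  define L2 where "L2 = map (\<lambda>p. (a#b#fst p, snd p)) L"
  have pL: "distinct (fst p) \<and> length (fst p) = 2*j \<and> a \<notin> set (fst p) \<and> b \<notin> set (fst p)" if "p \<in> set L" for p
    using L that unfolding perms2_def by auto
  have L2p: "\<forall>p\<in>set L2. fst p \<in> perms2 V (Suc j)"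
    using L ab unfolding L2_def perms2_def by auto
  have sl: "(\<Sum>p\<leftarrow>L2. snd p * chi (Suc j) (fst p) S) = (\<Sum>p\<leftarrow>L. snd p * chi (Suc j) (a#b#fst p) S)" for S
    unfolding L2_def by (simp add: comp_def)
  have up: "upm (int (Suc j) - 1) g2 S = (if a \<in> S then upm (int j - 1) g (S - {a, b}) else 0)
      - (if b \<in> S then upm (int j - 1) g (S - {b, a}) else 0)" if "finite S" for S
  proof -
    have "int (Suc j) - 1 = int j" by simp
    hence "upm (int (Suc j) - 1) g2 S = upm (int j) g2 S" by simp
    also have "\<dots> = upm (int j) (\<lambda>W. if a \<in> W \<and> b \<notin> W then g (W - {a}) else 0) S
       - upm (int j) (\<lambda>W. if b \<in> W \<and> a \<notin> W then g (W - {b}) else 0) S"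
      unfolding g2_def by (rule upm_diff)
    also have "upm (int j) (\<lambda>W. if a \<in> W \<and> b \<notin> W then g (W - {a}) else 0) S
       = (if a \<in> S then upm (int j - 1) g (S - {a, b}) else 0)"
      using lift[OF that ab(1), of "int j - 1" g] by simp
    also have "upm (int j) (\<lambda>W. if b \<in> W \<and> a \<notin> W then g (W - {b}) else 0) S
       = (if b \<in> S then upm (int j - 1) g (S - {b, a}) else 0)"
      using lift[OF that ab(1)[symmetric], of "int j - 1" g] by simp
    finally show ?thesis by simp
  qed
  show ?thesis unfolding MM_def
  proof (intro exI conjI allI impI)
    show "\<forall>p\<in>set L2. fst p \<in> perms2 V (Suc j)" by (rule L2p)
    fix S assume S: "S \<subseteq> V \<and> card S = Suc j"
    have fS: "finite S" using S V finite_subset by blast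
    have aT: "a \<notin> T" "b \<notin> T" using T by auto
    consider (A) "a \<in> S" "b \<notin> S" | (B) "b \<in> S" "a \<notin> S" | (C) "a \<in> S \<longleftrightarrow> b \<in> S" by blast
    thus "(if S = insert a T then 1 else 0) - (if S = insert b T then 1 else 0)
        = upm (int (Suc j) - 1) g2 S + (\<Sum>p\<leftarrow>L2. snd p * chi (Suc j) (fst p) S)"
    proof cases
      case A
      have S': "S - {a} \<subseteq> ?V'" "card (S - {a}) = j" using S A fS by auto
      have "map (\<lambda>p. snd p * chi (Suc j) (a#b#fst p) S) L = map (\<lambda>p. snd p * chi j (fst p) (S - {a})) L"
        using chi_cons(1)[OF ab(1) _ _ _ _ fS A] pL by (intro map_cong) auto
      hence m2: "(\<Sum>p\<leftarrow>L. snd p * chi (Suc j) (a#b#fst p) S) = (\<Sum>p\<leftarrow>L. snd p * chi j (fst p) (S - {a}))"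
        by (rule arg_cong)
      have E: "(if S - {a} = T then 1 else 0) = upm (int j - 1) g (S - {a}) + (\<Sum>p\<leftarrow>L. snd p * chi j (fst p) (S - {a}))"
        using e S' by blast
      have "S - {a, b} = S - {a}" using A by auto
      moreover have "(S = insert a T) = (S - {a} = T)" using A aT by auto
      moreover have "S \<noteq> insert b T" using A aT by auto
      ultimately show ?thesis unfolding sl m2 up[OF fS] using E A by simp
    next
      case B
      have S': "S - {b} \<subseteq> ?V'" "card (S - {b}) = j" using S B fS by auto
      have "map (\<lambda>p. snd p * chi (Suc j) (a#b#fst p) S) L = map (\<lambda>p. - (snd p * chi j (fst p) (S - {b}))) L"
        using chi_cons(2)[OF ab(1) _ _ _ _ fS B] pL by (intro map_cong) auto
      hence m2: "(\<Sum>p\<leftarrow>L. snd p * chi (Suc j) (a#b#fst p) S) = - (\<Sum>p\<leftarrow>L. snd p * chi j (fst p) (S - {b}))"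
        using sum_list_neg by metis
      have E: "(if S - {b} = T then 1 else 0) = upm (int j - 1) g (S - {b}) + (\<Sum>p\<leftarrow>L. snd p * chi j (fst p) (S - {b}))"
        using e S' by blast
      have "S - {b, a} = S - {b}" using B by auto
      moreover have "(S = insert b T) = (S - {b} = T)" using B aT by auto
      moreover have "S \<noteq> insert a T" using B aT by auto
      ultimately show ?thesis unfolding sl m2 up[OF fS] using E B by simp
    next
      case C
      have "map (\<lambda>p. snd p * chi (Suc j) (a#b#fst p) S) L = map (\<lambda>p. 0) L"
        using chi_cons(3)[OF ab(1) _ _ _ _ fS C] pL by (intro map_cong) auto
      hence m2: "(\<Sum>p\<leftarrow>L. snd p * chi (Suc j) (a#b#fst p) S) = 0"
        by (metis (no_types) map_replicate_const sum_list_replicate mult_zero_right length_map)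
      moreover have "S \<noteq> insert a T" "S \<noteq> insert b T" using C aT ab(1) by auto
      moreover have "{a, b} = {b, a}" by auto
      ultimately show ?thesis unfolding sl m2 up[OF fS] using C by auto
    qed
  qed
qed



lemma conn:
  assumes V: "finite V"
    and rfl: "\<And>X. Rel X X"
    and trn: "\<And>X Y Z. Rel X Y \<Longrightarrow> Rel Y Z \<Longrightarrow> Rel X Z"
    and swp: "\<And>T a b. a \<in> V \<Longrightarrow> b \<in> V \<Longrightarrow> a \<noteq> b \<Longrightarrow> T \<subseteq> V - {a, b} \<Longrightarrow> card T = j \<Longrightarrow> Rel (insert a T) (insert b T)"
    and S': "S' \<subseteq> V" "card S' = Suc j"
  shows "S \<subseteq> V \<Longrightarrow> card S = Suc j \<Longrightarrow> Rel S S'"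
proof (induction "card (S - S')" arbitrary: S)
  case 0
  have fS: "finite S" using 0 V finite_subset by blast
  have fS': "finite S'" using S' V finite_subset by blast
  have "S - S' = {}" using 0 fS by simp
  hence "S \<subseteq> S'" by blast
  hence "S = S'" using card_subset_eq[OF fS'] 0 S' by simp
  thus ?case using rfl by simp
next
  case (Suc n)
  have fS: "finite S" using Suc V finite_subset by blast
  have fS': "finite S'" using S' V finite_subset by blast
  obtain x where x: "x \<in> S" "x \<notin> S'" using Suc(2) by (metis Diff_iff card.empty ex_in_conv nat.distinct(1))
  have "\<not> S' \<subseteq> S"
  proof
    assume "S' \<subseteq> S"
    hence "S' = S" using card_subset_eq[OF fS] Suc S' by simp
    thus False using x by simp
  qed
  then obtain y where y: "y \<in> S'" "y \<notin> S" by blast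
  define T where "T = S - {x}"
  have cT: "card T = j" using Suc(4) x fS T_def by simp
  have r1: "Rel S (insert y T)"
  proof -
    have "S = insert x T" using x T_def by auto
    moreover have "Rel (insert x T) (insert y T)"
      using swp[of x y T] x y Suc(3) S' cT T_def by auto
    ultimately show ?thesis by simp
  qed
  have "insert y T - S' = (S - S') - {x}" using x y T_def by auto
  hence "card (insert y T - S') = n" using Suc(2) x by simp
  moreover have "insert y T \<subseteq> V" using y S' Suc(3) T_def by auto
  moreover have "card (insert y T) = Suc j" using cT y fS T_def by simp
  ultimately have "Rel (insert y T) S'" using Suc(1) by simp
  thus ?case using r1 trn by blast
qed



lemma span_all: "\<forall>(V::'a set) \<phi>. finite V \<longrightarrow> 2*j \<le> card V \<longrightarrow> MM V j \<phi>"
proof (induction j)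
  case 0
  show ?case
  proof (intro allI impI)
  fix V :: "'a set" and \<phi> assume "finite V" "2*0 \<le> card V"
  show "MM V 0 \<phi>" unfolding MM_def
  proof (rule exI[of _ "\<lambda>U::'a set. 0"], rule exI[of _ "[([]::'a list, \<phi> {})]"], intro conjI allI impI)
    show "\<forall>p\<in>set [([]::'a list, \<phi> {})]. fst p \<in> perms2 V 0" unfolding perms2_def by simp
    fix S assume S: "S \<subseteq> V \<and> card S = 0"
    moreover have "finite S" using S \<open>finite V\<close> finite_subset by blast
    ultimately have S0: "S = {}" by simp
    have 1: "upm (int 0 - 1) (\<lambda>U::'a set. 0) S = 0" unfolding upm_def by simp
    have 2: "(\<Sum>p\<leftarrow>[([]::'a list, \<phi> {})]. snd p * chi 0 (fst p) S) = \<phi> {} * chi 0 ([]::'a list) S" by simp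
    have 3: "chi 0 ([]::'a list) S = 1" unfolding chi_def S0 by simp
    show "\<phi> S = upm (int 0 - 1) (\<lambda>U::'a set. 0) S + (\<Sum>p\<leftarrow>[([]::'a list, \<phi> {})]. snd p * chi 0 (fst p) S)"
      unfolding 2 using 1 3 S0 by simp
  qed
  qed
next
  case (Suc j)
  show ?case
  proof (intro allI impI)
  fix V :: "'a set" and \<phi> assume V: "finite V" and cV: "2 * Suc j \<le> card V"
  note SP = V cV
  define \<delta> where "\<delta> X S = (if S = X then 1 else (0::real))" for X S :: "'a set"
  define Rel where "Rel X Y = MM V (Suc j) (\<lambda>S. \<delta> X S - \<delta> Y S)" for X Y
  have rfl: "Rel X X" for X unfolding Rel_def using MM_zero by simp
  have trn: "Rel X Z" if "Rel X Y" "Rel Y Z" for X Y Z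
  proof -
    have "MM V (Suc j) (\<lambda>S. (\<delta> X S - \<delta> Y S) + (\<delta> Y S - \<delta> Z S))"
      using that unfolding Rel_def by (rule MM_add)
    thus ?thesis unfolding Rel_def by simp
  qed
  have swp: "Rel (insert a T) (insert b T)"
    if ab: "a \<in> V" "b \<in> V" "a \<noteq> b" and T: "T \<subseteq> V - {a, b}" "card T = j" for T a b
  proof -
    have "card (V - {a, b}) = card V - 2" using ab V by (simp add: card_Diff_subset)
    hence "2 * j \<le> card (V - {a, b})" using SP by simp
    hence "MM (V - {a, b}) j (\<delta> T)" using Suc.IH V by blast
    hence "MM (V - {a, b}) j (\<lambda>S. if S = T then 1 else 0)" unfolding \<delta>_def by simp
    from step1[OF V ab(3,1,2) T(1) this]
    show ?thesis unfolding Rel_def \<delta>_def by simp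
  qed
  have d2: "Rel S S'" if "S \<subseteq> V" "card S = Suc j" "S' \<subseteq> V" "card S' = Suc j" for S S'
  proof (rule conn[of V Rel j S' S])
    show "finite V" by (rule V)
    show "\<And>X. Rel X X" by (rule rfl)
    show "\<And>X Y Z. Rel X Y \<Longrightarrow> Rel Y Z \<Longrightarrow> Rel X Z" by (rule trn)
    show "\<And>T a b. a \<in> V \<Longrightarrow> b \<in> V \<Longrightarrow> a \<noteq> b \<Longrightarrow> T \<subseteq> V - {a, b} \<Longrightarrow> card T = j \<Longrightarrow> Rel (insert a T) (insert b T)"
      by (rule swp)
  qed (use that in auto)
  have d3: "MM V (Suc j) (\<delta> S)" if S: "S \<subseteq> V" "card S = Suc j" for S
  proof -
    obtain x where x: "x \<in> S" using S by (metis card.empty ex_in_conv nat.distinct(1))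
    define U where "U = S - {x}"
    define Z where "Z = V - U"
    have fS: "finite S" using S V finite_subset by blast
    have cU: "card U = j" using S x fS U_def by simp
    have UV: "U \<subseteq> V" using S U_def by auto
    have fU: "finite U" using fS U_def by simp
    have fZ: "finite Z" using V Z_def by simp
    have cZ: "card Z = card V - j" using Z_def UV cU V by (simp add: card_Diff_subset fU)
    hence cZp: "card Z > 0" using SP by simp
    have io: "upm (int j) (\<delta> U) X = (if U \<subseteq> X then 1 else 0)" if "finite X" for X
    proof -
      have "upm (int j) (\<delta> U) X = (\<Sum>W\<in>{W. W \<subseteq> X \<and> int (card W) = int j}. if W = U then 1 else 0)"
        unfolding upm_def \<delta>_def by simp
      also have "\<dots> = (if U \<in> {W. W \<subseteq> X \<and> int (card W) = int j} then 1 else 0)"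
        using that by (subst sum.delta) auto
      finally show ?thesis using cU by simp
    qed
    have MMi: "MM V (Suc j) (\<lambda>X. if U \<subseteq> X then 1 else 0)"
    proof (rule MM_cong[OF MM_upm[of V "Suc j" "\<delta> U"]])
      fix X assume "X \<subseteq> V" "card X = Suc j"
      hence "finite X" using V finite_subset by blast
      thus "(if U \<subseteq> X then 1 else 0) = upm (int (Suc j) - 1) (\<delta> U) X" using io by simp
    qed
    have zs: "(\<Sum>z\<in>Z. \<delta> (insert z U) X) = (if U \<subseteq> X then 1 else 0)"
      if X: "X \<subseteq> V" "card X = Suc j" for X
    proof (cases "U \<subseteq> X")
      case True
      have fX: "finite X" using X V finite_subset by blast
      have "card (X - U) = 1" using True X cU fU by (simp add: card_Diff_subset)
      then obtain z0 where z0: "X - U = {z0}" using card_1_singletonE by blast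
      have z0Z: "z0 \<in> Z" using z0 X Z_def by auto
      have "\<delta> (insert z U) X = (if z = z0 then 1 else 0)" if "z \<in> Z" for z
      proof -
        have "z \<notin> U" using that Z_def by simp
        hence "(X = insert z U) \<longleftrightarrow> z = z0" using z0 True by blast
        thus ?thesis unfolding \<delta>_def by simp
      qed
      hence "(\<Sum>z\<in>Z. \<delta> (insert z U) X) = (\<Sum>z\<in>Z. if z = z0 then 1 else 0)" by simp
      also have "\<dots> = 1" using z0Z fZ by simp
      finally show ?thesis using True by simp
    next
      case False
      hence "\<delta> (insert z U) X = 0" for z unfolding \<delta>_def by auto
      thus ?thesis using False by simp
    qed
    have A: "MM V (Suc j) (\<lambda>X. (1 / real (card Z)) * ((\<Sum>z\<in>Z. \<delta> S X - \<delta> (insert z U) X) + (if U \<subseteq> X then 1 else 0)))"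
    proof (intro MM_smult MM_add MMi MM_sum[OF fZ])
      fix z assume z: "z \<in> Z"
      have "insert z U \<subseteq> V" "card (insert z U) = Suc j" using z Z_def UV cU fU by auto
      thus "MM V (Suc j) (\<lambda>X. \<delta> S X - \<delta> (insert z U) X)" using d2[OF S] unfolding Rel_def by simp
    qed
    show ?thesis
    proof (rule MM_cong[OF A])
      fix X assume X: "X \<subseteq> V" "card X = Suc j"
      have "(\<Sum>z\<in>Z. \<delta> S X - \<delta> (insert z U) X) + (if U \<subseteq> X then 1 else 0)
          = real (card Z) * \<delta> S X"
        using zs[OF X] by (simp add: sum_subtractf)
      thus "\<delta> S X = (1 / real (card Z)) * ((\<Sum>z\<in>Z. \<delta> S X - \<delta> (insert z U) X) + (if U \<subseteq> X then 1 else 0))"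
        using cZp by simp
    qed
  qed
  define J where "J = {T. T \<subseteq> V \<and> card T = Suc j}"
  have fJ: "finite J" unfolding J_def using V by simp
  have "MM V (Suc j) (\<lambda>X. \<Sum>T\<in>J. \<phi> T * \<delta> T X)"
    by (intro MM_sum[OF fJ] MM_smult) (use d3 J_def in auto)
  thus "MM V (Suc j) \<phi>"
  proof (rule MM_cong)
    fix X assume "X \<subseteq> V" "card X = Suc j"
    hence "X \<in> J" unfolding J_def by simp
    thus "\<phi> X = (\<Sum>T\<in>J. \<phi> T * \<delta> T X)" unfolding \<delta>_def using fJ
      by (simp add: if_distrib[of "\<lambda>x. \<phi> _ * x"] sum.delta' cong: if_cong)
  qed
  qed
qed

lemma span: "finite V \<Longrightarrow> 2*j \<le> card V \<Longrightarrow> MM V j \<phi>"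
  using span_all by blast



lemma chi_sum:
  assumes V: "finite V"
  shows "(\<Sum>S\<in>{S. S \<subseteq> V \<and> card S = j}. F S * chi j xs S)
       = (\<Sum>R\<in>admissible V j j xs. (-1) ^ card (R \<inter> bset j xs) * F R)"
proof -
  let ?J = "{S. S \<subseteq> V \<and> card S = j}"
  have fJ: "finite ?J" using V by simp
  have "(\<Sum>S\<in>?J. F S * chi j xs S) = (\<Sum>S\<in>?J. if S \<in> admissible V j j xs then (-1) ^ card (S \<inter> bset j xs) * F S else 0)"
    by (rule sum.cong) (auto simp: chi_adm[of _ V])
  also have "\<dots> = (\<Sum>S\<in>{S\<in>?J. S \<in> admissible V j j xs}. (-1) ^ card (S \<inter> bset j xs) * F S)"
    using sum.inter_filter[OF fJ, symmetric] by simp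
  also have "{S\<in>?J. S \<in> admissible V j j xs} = admissible V j j xs"
    unfolding admissible_def by auto
  finally show ?thesis .
qed

lemma orth_list:
  assumes "\<forall>p\<in>set L. (\<Sum>S\<in>J. F S * chi j (fst p) S) = 0"
  shows "(\<Sum>S\<in>J. F S * (\<Sum>p\<leftarrow>L. snd p * chi j (fst p) S)) = 0"
  using assms
proof (induction L)
  case Nil thus ?case by simp
next
  case (Cons p L)
  have "(\<Sum>S\<in>J. F S * (\<Sum>q\<leftarrow>p#L. snd q * chi j (fst q) S))
      = snd p * (\<Sum>S\<in>J. F S * chi j (fst p) S) + (\<Sum>S\<in>J. F S * (\<Sum>q\<leftarrow>L. snd q * chi j (fst q) S))"
    by (simp add: sum.distrib sum_distrib_left algebra_simps)
  thus ?case using Cons by simp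
qed

lemma core:
  assumes V: "finite V" and cV: "2*j \<le> card V"
    and H: "\<forall>xs\<in>perms2 V j. sgn_sum V j j h xs = 0"
  shows "\<exists>g. \<forall>S. S \<subseteq> V \<and> card S = j \<longrightarrow> h S = upm (int j - 1) g S"
proof -
  obtain g L where L: "\<forall>p\<in>set L. fst p \<in> perms2 V j"
    and e: "\<forall>S. S \<subseteq> V \<and> card S = j \<longrightarrow> h S = upm (int j - 1) g S + (\<Sum>p\<leftarrow>L. snd p * chi j (fst p) S)"
    using span[OF V cV, of h] unfolding MM_def by blast
  define J where "J = {S. S \<subseteq> V \<and> card S = j}"
  define c where "c S = (\<Sum>p\<leftarrow>L. snd p * chi j (fst p) S)" for S
  have fJ: "finite J" unfolding J_def using V by simp
  have hc: "(\<Sum>S\<in>J. h S * c S) = 0" unfolding c_def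
  proof (rule orth_list, rule ballI)
    fix p assume "p \<in> set L"
    hence xs: "fst p \<in> perms2 V j" using L by blast
    show "(\<Sum>S\<in>J. h S * chi j (fst p) S) = 0"
      unfolding J_def chi_sum[OF V] using H xs unfolding sgn_sum_def by (simp add: mult.commute)
  qed
  have uc: "(\<Sum>S\<in>J. upm (int j - 1) g S * c S) = 0" unfolding c_def
  proof (rule orth_list, rule ballI)
    fix p assume "p \<in> set L"
    hence xs: "fst p \<in> perms2 V j" using L by blast
    show "(\<Sum>S\<in>J. upm (int j - 1) g S * chi j (fst p) S) = 0"
    proof -
      have "int j - 1 < int j" by simp
      note o = orth[OF V xs this, where k=j and g=g]
      show ?thesis unfolding J_def chi_sum[OF V] using o by simp
    qed
  qed
  have "(\<Sum>S\<in>J. (c S)^2) = (\<Sum>S\<in>J. h S * c S - upm (int j - 1) g S * c S)"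
  proof (rule sum.cong[OF refl])
    fix S assume "S \<in> J"
    hence "h S = upm (int j - 1) g S + c S" using e unfolding J_def c_def by blast
    thus "(c S)^2 = h S * c S - upm (int j - 1) g S * c S" by (simp add: power2_eq_square algebra_simps)
  qed
  also have "\<dots> = 0" using hc uc by (simp add: sum_subtractf)
  finally have s0: "(\<Sum>S\<in>J. (c S)^2) = 0" .
  have "\<forall>S\<in>J. (c S)^2 = 0" using sum_nonneg_eq_0_iff[OF fJ, of "\<lambda>S. (c S)^2"] s0 by simp
  hence "\<forall>S\<in>J. c S = 0" by simp
  hence "\<forall>S. S \<subseteq> V \<and> card S = j \<longrightarrow> h S = upm (int j - 1) g S"
    using e unfolding J_def c_def by simp
  thus ?thesis by blast
qed



lemma comp_count:
  assumes R: "finite R" and U: "U \<subseteq> R" "card U = m" and mj: "m \<le> j"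
  shows "card {S. (S \<subseteq> R \<and> card S = j) \<and> U \<subseteq> S} = (card R - m) choose (j - m)"
proof -
  have fU: "finite U" using U R finite_subset by blast
  define Y where "Y = {Y. Y \<subseteq> R - U \<and> card Y = j - m}"
  have "{S. (S \<subseteq> R \<and> card S = j) \<and> U \<subseteq> S} = (\<lambda>Y. U \<union> Y) ` Y"
  proof (rule set_eqI, rule iffI)
    fix S assume S: "S \<in> {S. (S \<subseteq> R \<and> card S = j) \<and> U \<subseteq> S}"
    have "S - U \<in> Y" using S U fU unfolding Y_def by (auto simp: card_Diff_subset)
    moreover have "S = U \<union> (S - U)" using S by auto
    ultimately show "S \<in> (\<lambda>Y. U \<union> Y) ` Y" by blast
  next
    fix S assume "S \<in> (\<lambda>Y. U \<union> Y) ` Y"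
    then obtain T where T: "T \<subseteq> R - U" "card T = j - m" "S = U \<union> T" unfolding Y_def by blast
    have fT: "finite T" using T R finite_subset by blast
    have "card S = m + (j - m)" using T U fT fU by (subst T(3), subst card_Un_disjoint) auto
    thus "S \<in> {S. (S \<subseteq> R \<and> card S = j) \<and> U \<subseteq> S}" using T U mj by auto
  qed
  moreover have "inj_on (\<lambda>Y. U \<union> Y) Y"
    unfolding Y_def inj_on_def by blast
  ultimately have "card {S. (S \<subseteq> R \<and> card S = j) \<and> U \<subseteq> S} = card Y" by (simp add: card_image)
  also have "\<dots> = card (R - U) choose (j - m)" unfolding Y_def using R by (simp add: n_subsets)
  also have "card (R - U) = card R - m" using U fU by (simp add: card_Diff_subset)
  finally show ?thesis .
qed

lemma comp_sum:
  assumes R: "finite R" and mj: "m \<le> j"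
  shows "(\<Sum>S\<in>{S. S \<subseteq> R \<and> card S = j}. \<Sum>U\<in>{U. U \<subseteq> S \<and> card U = m}. g U)
       = real ((card R - m) choose (j - m)) * (\<Sum>U\<in>{U. U \<subseteq> R \<and> card U = m}. g U)"
proof -
  define A where "A = {S. S \<subseteq> R \<and> card S = j}"
  define B where "B = {U. U \<subseteq> R \<and> card U = m}"
  have fA: "finite A" "finite B" unfolding A_def B_def using R by simp_all
  have "(\<Sum>S\<in>A. \<Sum>U\<in>{U. U \<subseteq> S \<and> card U = m}. g U) = (\<Sum>S\<in>A. \<Sum>U\<in>{U\<in>B. U \<subseteq> S}. g U)"
    by (rule sum.cong[OF refl], rule sum.cong) (auto simp: A_def B_def)
  also have "\<dots> = (\<Sum>U\<in>B. \<Sum>S | S \<in> A \<and> U \<subseteq> S. g U)" by (rule sum.swap_restrict[OF fA])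
  also have "\<dots> = (\<Sum>U\<in>B. real ((card R - m) choose (j - m)) * g U)"
  proof (rule sum.cong[OF refl])
    fix U assume "U \<in> B"
    hence "card {S. S \<in> A \<and> U \<subseteq> S} = (card R - m) choose (j - m)"
      using comp_count[OF R _ _ mj, of U] unfolding A_def B_def by simp
    thus "(\<Sum>S | S \<in> A \<and> U \<subseteq> S. g U) = real ((card R - m) choose (j - m)) * g U" by simp
  qed
  also have "\<dots> = real ((card R - m) choose (j - m)) * (\<Sum>U\<in>B. g U)" by (simp add: sum_distrib_left)
  finally show ?thesis unfolding A_def B_def .
qed

lemma upm_nat: "upm (int m) g S = (\<Sum>U\<in>{U. U \<subseteq> S \<and> card U = m}. g U)"
  unfolding upm_def by simp

lemma comp_upm:
  assumes R: "finite R" "card R = k" and jk: "j \<le> k"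
  shows "upm (int j) (upm (int j - 1) g) R = real (k - j + 1) * upm (int j - 1) g R"
proof (cases j)
  case 0
  have "upm (- 1) g S = 0" for S unfolding upm_def by simp
  thus ?thesis using 0 unfolding upm_def by simp
next
  case (Suc m)
  have e: "int j - 1 = int m" using Suc by simp
  have "upm (int j) (upm (int m) g) R = real ((card R - m) choose (j - m)) * upm (int m) g R"
    unfolding upm_nat using comp_sum[OF R(1), of m j g] Suc by simp
  also have "(card R - m) choose (j - m) = k - j + 1" using Suc R jk by simp
  finally show ?thesis unfolding e by simp
qed



lemma upm_cong: "(\<And>S. S \<subseteq> R \<Longrightarrow> int (card S) = d \<Longrightarrow> h1 S = h2 S) \<Longrightarrow> upm d h1 R = upm d h2 R"
  unfolding upm_def by (rule sum.cong) auto

lemma count_adm: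
  assumes V: "finite V" and xs: "xs \<in> perms2 V j" and jk: "j \<le> k"
    and S: "S \<subseteq> V" "card S = j" and one: "\<forall>i<j. card (S \<inter> {xs!(2*i), xs!(2*i+1)}) = 1"
  shows "(\<Sum>R | R \<in> admissible V k j xs \<and> S \<subseteq> R. (-1::real) ^ card (R \<inter> bset j xs))
       = real ((card V - 2*j) choose (k - j)) * (-1) ^ card (S \<inter> bset j xs)"
proof -
  have d: "distinct xs" and l: "length xs = 2*j" and sV: "set xs \<subseteq> V"
    using xs unfolding perms2_def by auto
  have fS: "finite S" using S V finite_subset by blast
  have "j \<le> card (S \<inter> set xs)" using pick[OF d l fS] one by fastforce
  hence Sx: "S \<subseteq> set xs" using fS S(2) card_subset_eq[of S "S \<inter> set xs"] by (metis Int_lower1 card_mono finite_Int le_antisym inf.absorb_iff1)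
  define A where "A = {R. R \<in> admissible V k j xs \<and> S \<subseteq> R}"
  have same: "R \<inter> {xs!(2*i), xs!(2*i+1)} = S \<inter> {xs!(2*i), xs!(2*i+1)}" if R: "R \<in> A" "i < j" for R i
  proof -
    have "card (R \<inter> {xs!(2*i), xs!(2*i+1)}) = 1" using R unfolding A_def admissible_def by auto
    moreover have "S \<inter> {xs!(2*i), xs!(2*i+1)} \<subseteq> R \<inter> {xs!(2*i), xs!(2*i+1)}" using R unfolding A_def by auto
    ultimately show ?thesis using one R(2) by (metis card_subset_eq finite.emptyI finite.insertI finite_Int)
  qed
  have bs: "R \<inter> bset j xs = S \<inter> bset j xs" if R: "R \<in> A" for R
  proof
    show "R \<inter> bset j xs \<subseteq> S \<inter> bset j xs"
    proof
      fix x assume x: "x \<in> R \<inter> bset j xs"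
      then obtain i where i: "i < j" "x = xs!(2*i+1)" unfolding bset_def by auto
      hence "x \<in> R \<inter> {xs!(2*i), xs!(2*i+1)}" using x by auto
      thus "x \<in> S \<inter> bset j xs" using same[OF R i(1)] x by auto
    qed
    show "S \<inter> bset j xs \<subseteq> R \<inter> bset j xs" using R unfolding A_def by auto
  qed
  define Y where "Y = {T. T \<subseteq> V - set xs \<and> card T = k - j}"
  have img: "A = (\<lambda>T. S \<union> T) ` Y"
  proof (rule set_eqI, rule iffI)
    fix R assume R: "R \<in> A"
    have RV: "R \<subseteq> V" "card R = k" using R unfolding A_def admissible_def by auto
    have fR: "finite R" using RV V finite_subset by blast
    have "R - S \<subseteq> V - set xs"
    proof
      fix x assume x: "x \<in> R - S"
      have "x \<notin> set xs"
      proof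
        assume "x \<in> set xs"
        then obtain i where i: "i < j" "x = xs!(2*i) \<or> x = xs!(2*i+1)" using set_pairs[OF l] by blast
        hence "x \<in> R \<inter> {xs!(2*i), xs!(2*i+1)}" using x by auto
        hence "x \<in> S" using same[OF R i(1)] by auto
        thus False using x by simp
      qed
      thus "x \<in> V - set xs" using x RV by auto
    qed
    moreover have "card (R - S) = k - j" using R RV S fS unfolding A_def by (simp add: card_Diff_subset)
    moreover have "R = S \<union> (R - S)" using R unfolding A_def by auto
    ultimately show "R \<in> (\<lambda>T. S \<union> T) ` Y" unfolding Y_def by blast
  next
    fix R assume "R \<in> (\<lambda>T. S \<union> T) ` Y"
    then obtain T where T: "T \<subseteq> V - set xs" "card T = k - j" "R = S \<union> T" unfolding Y_def by blast
    have fT: "finite T" using T V finite_subset by blast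
    have dj: "S \<inter> T = {}" using T Sx by auto
    have "card R = k" using T S fS fT dj jk by (simp add: card_Un_disjoint)
    moreover have "R \<subseteq> V" using T S by auto
    moreover have "\<forall>i<j. card (R \<inter> {xs!(2*i), xs!(2*i+1)}) = 1"
    proof (intro allI impI)
      fix i assume i: "i < j"
      have "xs!(2*i) \<in> set xs" "xs!(2*i+1) \<in> set xs" using l i by simp_all
      hence "R \<inter> {xs!(2*i), xs!(2*i+1)} = S \<inter> {xs!(2*i), xs!(2*i+1)}" using T by auto
      thus "card (R \<inter> {xs!(2*i), xs!(2*i+1)}) = 1" using one i by simp
    qed
    ultimately show "R \<in> A" unfolding A_def admissible_def using T by auto
  qed
  have inj: "inj_on (\<lambda>T. S \<union> T) Y"
  proof (rule inj_onI)
    fix T1 T2 assume "T1 \<in> Y" "T2 \<in> Y" "S \<union> T1 = S \<union> T2"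
    moreover have "S \<inter> T1 = {}" "S \<inter> T2 = {}" using \<open>T1 \<in> Y\<close> \<open>T2 \<in> Y\<close> Sx unfolding Y_def by auto
    ultimately show "T1 = T2" by blast
  qed
  have cA: "card A = (card V - 2*j) choose (k - j)"
  proof -
    have "card A = card Y" using img inj by (simp add: card_image)
    also have "\<dots> = card (V - set xs) choose (k - j)" unfolding Y_def using V by (simp add: n_subsets)
    also have "card (V - set xs) = card V - 2*j" using sV V d l by (simp add: card_Diff_subset distinct_card)
    finally show ?thesis .
  qed
  have "(\<Sum>R\<in>A. (-1::real) ^ card (R \<inter> bset j xs)) = (\<Sum>R\<in>A. (-1::real) ^ card (S \<inter> bset j xs))"
    using bs by simp
  also have "\<dots> = real (card A) * (-1) ^ card (S \<inter> bset j xs)" by simp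
  finally show ?thesis unfolding A_def[symmetric] cA .
qed

lemma ns:
  assumes V: "finite V" and xs: "xs \<in> perms2 V j" and jk: "j \<le> k"
  shows "sgn_sum V k j (upm (int j) h) xs = real ((card V - 2*j) choose (k - j)) * sgn_sum V j j h xs"
proof -
  define A where "A = admissible V k j xs"
  define B where "B = {S. S \<subseteq> V \<and> card S = j}"
  define C where "C = real ((card V - 2*j) choose (k - j))"
  have d: "distinct xs" and l: "length xs = 2*j" and sV: "set xs \<subseteq> V"
    using xs unfolding perms2_def by auto
  have finB: "finite B" unfolding B_def using V by simp
  have finA: "finite A" unfolding A_def using fin_adm V by blast
  have "sgn_sum V k j (upm (int j) h) xs = (\<Sum>R\<in>A. \<Sum>S\<in>{S\<in>B. S \<subseteq> R}. (-1::real) ^ card (R \<inter> bset j xs) * h S)"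
    unfolding sgn_sum_def A_def[symmetric]
  proof (rule sum.cong[OF refl])
    fix R assume "R \<in> A"
    hence "R \<subseteq> V" unfolding A_def admissible_def by auto
    hence "{U. U \<subseteq> R \<and> int (card U) = int j} = {U\<in>B. U \<subseteq> R}" unfolding B_def by auto
    thus "(-1::real) ^ card (R \<inter> bset j xs) * upm (int j) h R
        = (\<Sum>U\<in>{U\<in>B. U \<subseteq> R}. (-1::real) ^ card (R \<inter> bset j xs) * h U)"
      unfolding upm_def by (simp add: sum_distrib_left)
  qed
  also have "\<dots> = (\<Sum>S\<in>B. \<Sum>R | R \<in> A \<and> S \<subseteq> R. (-1::real) ^ card (R \<inter> bset j xs) * h S)"
    by (rule sum.swap_restrict[OF finA finB])
  also have "\<dots> = (\<Sum>S\<in>B. h S * (\<Sum>R | R \<in> A \<and> S \<subseteq> R. (-1::real) ^ card (R \<inter> bset j xs)))"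
    by (simp add: sum_distrib_left mult.commute)
  also have "\<dots> = (\<Sum>S\<in>B. h S * (C * chi j xs S))"
  proof (rule sum.cong[OF refl])
    fix S assume S: "S \<in> B"
    hence SV: "S \<subseteq> V" "card S = j" unfolding B_def by auto
    have fS: "finite S" using SV V finite_subset by blast
    show "h S * (\<Sum>R | R \<in> A \<and> S \<subseteq> R. (-1::real) ^ card (R \<inter> bset j xs)) = h S * (C * chi j xs S)"
    proof (cases "\<forall>i<j. card (S \<inter> {xs!(2*i), xs!(2*i+1)}) = 1")
      case True
      thus ?thesis using count_adm[OF V xs jk SV True] unfolding A_def C_def chi_def using SV by simp
    next
      case False
      then obtain i where i: "i < j" "card (S \<inter> {xs!(2*i), xs!(2*i+1)}) \<noteq> 1" by blast
      have chi0: "chi j xs S = 0" unfolding chi_def using i by auto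
      have "(\<Sum>R | R \<in> A \<and> S \<subseteq> R. (-1::real) ^ card (R \<inter> bset j xs)) = 0"
      proof (cases "xs!(2*i) \<notin> S \<and> xs!(2*i+1) \<notin> S")
        case True
        thus ?thesis using inv_zero[OF V xs i(1)] unfolding A_def by simp
      next
        case False
        have ne: "xs!(2*i) \<noteq> xs!(2*i+1)" using pair_ne[OF d l i(1)] .
        have both: "xs!(2*i) \<in> S \<and> xs!(2*i+1) \<in> S"
        proof (rule ccontr)
          assume "\<not> ?thesis"
          hence "S \<inter> {xs!(2*i), xs!(2*i+1)} = {xs!(2*i)} \<or> S \<inter> {xs!(2*i), xs!(2*i+1)} = {xs!(2*i+1)}"
            using False by auto
          thus False using i(2) by auto
        qed
        have e: "{R. R \<in> A \<and> S \<subseteq> R} = {}"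
        proof (rule ccontr)
          assume "{R. R \<in> A \<and> S \<subseteq> R} \<noteq> {}"
          then obtain R where R: "R \<in> A" "S \<subseteq> R" by blast
          hence "card (R \<inter> {xs!(2*i), xs!(2*i+1)}) = 1" using i(1) unfolding A_def admissible_def by auto
          moreover have "R \<inter> {xs!(2*i), xs!(2*i+1)} = {xs!(2*i), xs!(2*i+1)}" using both R by auto
          ultimately show False using ne by simp
        qed
        show ?thesis unfolding e by simp
      qed
      thus ?thesis using chi0 by simp
    qed
  qed
  also have "\<dots> = C * (\<Sum>S\<in>B. h S * chi j xs S)" by (simp add: sum_distrib_left algebra_simps)
  also have "(\<Sum>S\<in>B. h S * chi j xs S) = sgn_sum V j j h xs"
    unfolding B_def chi_sum[OF V] sgn_sum_def by (simp add: mult.commute)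
  finally show ?thesis unfolding C_def .
qed

lemma step:
  assumes V: "finite V" and cV: "2*k \<le> card V" and jk: "j \<le> k"
    and F: "\<forall>R. R \<subseteq> V \<and> card R = k \<longrightarrow> f R = upm (int j) h R"
    and W: "\<forall>xs\<in>perms2 V j. sgn_sum V k j f xs = 0"
  shows "\<exists>g. \<forall>R. R \<subseteq> V \<and> card R = k \<longrightarrow> f R = upm (int j - 1) g R"
proof -
  have Cpos: "real ((card V - 2*j) choose (k - j)) > 0" using cV jk by simp
  have "\<forall>xs\<in>perms2 V j. sgn_sum V j j h xs = 0"
  proof
    fix xs assume xs: "xs \<in> perms2 V j"
    have "sgn_sum V k j f xs = sgn_sum V k j (upm (int j) h) xs"
      unfolding sgn_sum_def by (rule sum.cong[OF refl]) (use F in \<open>auto simp: admissible_def\<close>)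
    hence "real ((card V - 2*j) choose (k - j)) * sgn_sum V j j h xs = 0"
      using ns[OF V xs jk, of h] W xs by simp
    thus "sgn_sum V j j h xs = 0" using Cpos by simp
  qed
  moreover have "2*j \<le> card V" using cV jk by simp
  ultimately obtain g where g: "\<forall>S. S \<subseteq> V \<and> card S = j \<longrightarrow> h S = upm (int j - 1) g S"
    using core[OF V] by blast
  have "f R = upm (int j - 1) (\<lambda>U. real (k - j + 1) * g U) R" if R: "R \<subseteq> V" "card R = k" for R
  proof -
    have fR: "finite R" using R V finite_subset by blast
    have "f R = upm (int j) h R" using F R by blast
    also have "\<dots> = upm (int j) (upm (int j - 1) g) R"
      by (rule upm_cong) (use g R in auto)
    also have "\<dots> = real (k - j + 1) * upm (int j - 1) g R" using comp_upm[OF fR R(2) jk] .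
    finally show ?thesis by (simp add: upm_mult)
  qed
  thus ?thesis by blast
qed



lemma split_ins:
  assumes Q: "finite Q" and a: "a \<notin> Q"
  shows "(\<Sum>U\<in>{U. U \<subseteq> insert a Q \<and> card U = Suc m}. g U)
       = (\<Sum>U\<in>{U. U \<subseteq> Q \<and> card U = Suc m}. g U) + (\<Sum>X\<in>{X. X \<subseteq> Q \<and> card X = m}. g (insert a X))"
proof -
  define P1 where "P1 = {U. U \<subseteq> Q \<and> card U = Suc m}"
  define P2 where "P2 = {X. X \<subseteq> Q \<and> card X = m}"
  have eq: "{U. U \<subseteq> insert a Q \<and> card U = Suc m} = P1 \<union> insert a ` P2"
  proof (rule set_eqI, rule iffI)
    fix U assume U: "U \<in> {U. U \<subseteq> insert a Q \<and> card U = Suc m}"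
    have fU: "finite U" using U Q finite_subset by auto
    show "U \<in> P1 \<union> insert a ` P2"
    proof (cases "a \<in> U")
      case True
      have "U - {a} \<in> P2" using U True fU unfolding P2_def by auto
      moreover have "U = insert a (U - {a})" using True by auto
      ultimately show ?thesis by blast
    next
      case False
      thus ?thesis using U unfolding P1_def by auto
    qed
  next
    fix U assume "U \<in> P1 \<union> insert a ` P2"
    thus "U \<in> {U. U \<subseteq> insert a Q \<and> card U = Suc m}"
    proof
      assume "U \<in> P1" thus ?thesis unfolding P1_def by auto
    next
      assume "U \<in> insert a ` P2"
      then obtain X where X: "X \<subseteq> Q" "card X = m" "U = insert a X" unfolding P2_def by blast
      have "finite X" using X Q finite_subset by blast
      moreover have "a \<notin> X" using X a by auto
      ultimately show ?thesis using X by auto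
    qed
  qed
  have fP: "finite P1" "finite (insert a ` P2)" unfolding P1_def P2_def using Q by simp_all
  have dj: "P1 \<inter> insert a ` P2 = {}" unfolding P1_def using a by auto
  have inj: "inj_on (insert a) P2"
  proof (rule inj_onI)
    fix x y assume xy: "x \<in> P2" "y \<in> P2" "insert a x = insert a y"
    have "a \<notin> x" "a \<notin> y" using xy(1,2) a unfolding P2_def by auto
    thus "x = y" using xy(3) by (metis Diff_insert_absorb)
  qed
  show ?thesis unfolding eq P1_def[symmetric] P2_def[symmetric]
    using sum.union_disjoint[OF fP dj, of g] sum.reindex[OF inj, of g] by simp
qed

lemma inj_all:
  "\<forall>k (V::'a set) (g::'a set \<Rightarrow> real). finite V \<longrightarrow> m \<le> k \<longrightarrow> m + k \<le> card V \<longrightarrow>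
     (\<forall>R. R \<subseteq> V \<and> card R = k \<longrightarrow> (\<Sum>U\<in>{U. U \<subseteq> R \<and> card U = m}. g U) = 0) \<longrightarrow>
     (\<forall>U. U \<subseteq> V \<and> card U = m \<longrightarrow> g U = 0)"
proof (induction m)
  case 0
  show ?case
  proof (intro allI impI)
    fix k and V :: "'a set" and g :: "'a set \<Rightarrow> real" and U
    assume V: "finite V" and "0 \<le> k" and kV: "0 + k \<le> card V"
      and H: "\<forall>R. R \<subseteq> V \<and> card R = k \<longrightarrow> (\<Sum>U\<in>{U. U \<subseteq> R \<and> card U = 0}. g U) = 0"
      and U: "U \<subseteq> V \<and> card U = 0"
    have "finite U" using U V finite_subset by blast
    hence "U = {}" using U by simp
    have "k \<le> card V" using kV by simp
    from obtain_subset_with_card_n[OF this]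
    obtain R where R: "R \<subseteq> V" "card R = k" "finite R" by blast
    have "{U. U \<subseteq> R \<and> card U = 0} = {{}}"
    proof (rule set_eqI, rule iffI)
      fix X assume "X \<in> {U. U \<subseteq> R \<and> card U = 0}"
      moreover hence "finite X" using R(3) finite_subset by blast
      ultimately show "X \<in> {{}}" by simp
    qed simp
    thus "g U = 0" using H R \<open>U = {}\<close> by auto
  qed
next
  case (Suc m)
  show ?case
  proof (intro allI impI)
    fix k and V :: "'a set" and g :: "'a set \<Rightarrow> real" and U
    assume V: "finite V" and mk: "Suc m \<le> k" and kV: "Suc m + k \<le> card V"
      and H: "\<forall>R. R \<subseteq> V \<and> card R = k \<longrightarrow> (\<Sum>U\<in>{U. U \<subseteq> R \<and> card U = Suc m}. g U) = 0"
      and U: "U \<subseteq> V \<and> card U = Suc m"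
    have swp: "g (insert a W) = g (insert b W)"
      if ab: "a \<in> V" "b \<in> V" "a \<noteq> b" and W: "W \<subseteq> V - {a, b}" "card W = m" for a b W
    proof -
      define g' where "g' X = g (insert a X) - g (insert b X)" for X
      let ?V' = "V - {a, b}"
      have cV': "card ?V' = card V - 2" using ab V by (simp add: card_Diff_subset)
      have hyp: "\<forall>Q. Q \<subseteq> ?V' \<and> card Q = k - 1 \<longrightarrow> (\<Sum>X\<in>{X. X \<subseteq> Q \<and> card X = m}. g' X) = 0"
      proof (intro allI impI)
        fix Q assume Q: "Q \<subseteq> ?V' \<and> card Q = k - 1"
        have fQ: "finite Q" using Q V finite_subset by blast
        have aQ: "a \<notin> Q" "b \<notin> Q" using Q by auto
        have "insert a Q \<subseteq> V" "card (insert a Q) = k" using Q ab aQ fQ mk by auto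
        hence 1: "(\<Sum>U\<in>{U. U \<subseteq> Q \<and> card U = Suc m}. g U) + (\<Sum>X\<in>{X. X \<subseteq> Q \<and> card X = m}. g (insert a X)) = 0"
          using H split_ins[OF fQ aQ(1), where m=m and g=g] by simp
        have "insert b Q \<subseteq> V" "card (insert b Q) = k" using Q ab aQ fQ mk by auto
        hence 2: "(\<Sum>U\<in>{U. U \<subseteq> Q \<and> card U = Suc m}. g U) + (\<Sum>X\<in>{X. X \<subseteq> Q \<and> card X = m}. g (insert b X)) = 0"
          using H split_ins[OF fQ aQ(2), where m=m and g=g] by simp
        show "(\<Sum>X\<in>{X. X \<subseteq> Q \<and> card X = m}. g' X) = 0"
          unfolding g'_def sum_subtractf using 1 2 by linarith
      qed
      have "finite ?V'" "m \<le> k - 1" "m + (k - 1) \<le> card ?V'" using V mk kV cV' by auto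
      hence "g' W = 0" using Suc.IH hyp W by blast
      thus ?thesis unfolding g'_def by simp
    qed
    have const: "g S = g S'" if "S \<subseteq> V" "card S = Suc m" "S' \<subseteq> V" "card S' = Suc m" for S S'
    proof (rule conn[of V "\<lambda>X Y. g X = g Y" m S' S])
      show "finite V" by (rule V)
      show "\<And>T a b. a \<in> V \<Longrightarrow> b \<in> V \<Longrightarrow> a \<noteq> b \<Longrightarrow> T \<subseteq> V - {a, b} \<Longrightarrow> card T = m \<Longrightarrow> g (insert a T) = g (insert b T)"
        by (rule swp)
    qed (use that in auto)
    have "k \<le> card V" using kV by simp
    from obtain_subset_with_card_n[OF this]
    obtain R where R: "R \<subseteq> V" "card R = k" "finite R" by blast
    have "(\<Sum>U'\<in>{U'. U' \<subseteq> R \<and> card U' = Suc m}. g U') = (\<Sum>U'\<in>{U'. U' \<subseteq> R \<and> card U' = Suc m}. g U)"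
    proof (rule sum.cong[OF refl])
      fix U' assume "U' \<in> {U'. U' \<subseteq> R \<and> card U' = Suc m}"
      hence "U' \<subseteq> V" "card U' = Suc m" using R by auto
      thus "g U' = g U" using const[of U' U] U by blast
    qed
    also have "\<dots> = real (k choose Suc m) * g U" using R by (simp add: n_subsets)
    finally have "real (k choose Suc m) * g U = 0" using H R by simp
    moreover have "k choose Suc m > 0" using mk by simp
    ultimately show "g U = 0" by simp
  qed
qed



theorem proposition2p4:
  fixes V :: "'a set" and k l :: nat and f :: "'a set \<Rightarrow> real"
  assumes "finite V" and "card V \<ge> 2 * k" and "k \<ge> l"
  shows "(\<forall>r. l \<le> r \<and> r \<le> k \<longrightarrow> level_weight V k r f = 0) \<longleftrightarrow>
    (\<exists>!h. h \<in> extensional {S. S \<subseteq> V \<and> int (card S) = int l - 1} \<and>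
       (\<forall>R. R \<subseteq> V \<and> card R = k \<longrightarrow>
          f R = (\<Sum>S\<in>{S. S \<subseteq> R \<and> int (card S) = int l - 1}. h S)))"
proof
  note V = assms(1) and cV = assms(2) and lk = assms(3)
  define D where "D = {S. S \<subseteq> V \<and> int (card S) = int l - 1}"
  assume A: "\<forall>r. l \<le> r \<and> r \<le> k \<longrightarrow> level_weight V k r f = 0"
  have W: "\<forall>xs\<in>perms2 V r. sgn_sum V k r f xs = 0" if "l \<le> r" "r \<le> k" for r
    using A that lw0[OF V] by blast
  have desc: "\<exists>h. \<forall>R. R \<subseteq> V \<and> card R = k \<longrightarrow> f R = upm (int (k - i)) h R" if "i \<le> k - l" for i
    using that
  proof (induction i)
    case 0
    have "f R = upm (int k) f R" if R: "R \<subseteq> V" "card R = k" for R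
    proof -
      have fR: "finite R" using R V finite_subset by blast
      have "{S. S \<subseteq> R \<and> int (card S) = int k} = {R}"
        using R fR card_subset_eq[OF fR] by auto
      thus ?thesis unfolding upm_def by simp
    qed
    thus ?case by auto
  next
    case (Suc i)
    then obtain h where h: "\<forall>R. R \<subseteq> V \<and> card R = k \<longrightarrow> f R = upm (int (k - i)) h R" by auto
    have "\<exists>g. \<forall>R. R \<subseteq> V \<and> card R = k \<longrightarrow> f R = upm (int (k - i) - 1) g R"
      by (rule step[OF V cV _ h W]) (use Suc.prems in auto)
    moreover have "int (k - i) - 1 = int (k - Suc i)" using Suc.prems lk by simp
    ultimately show ?case by (metis (no_types, lifting))
  qed
  obtain h where "\<forall>R. R \<subseteq> V \<and> card R = k \<longrightarrow> f R = upm (int l) h R"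
    using desc[of "k - l"] lk by auto
  from step[OF V cV lk this W[OF le_refl lk]]
  obtain g where g: "\<forall>R. R \<subseteq> V \<and> card R = k \<longrightarrow> f R = upm (int l - 1) g R" by blast
  define P where "P h \<longleftrightarrow> h \<in> extensional D \<and> (\<forall>R. R \<subseteq> V \<and> card R = k \<longrightarrow>
          f R = (\<Sum>S\<in>{S. S \<subseteq> R \<and> int (card S) = int l - 1}. h S))" for h
  have ex: "P (restrict g D)"
    unfolding P_def
  proof (intro conjI allI impI)
    show "restrict g D \<in> extensional D" by simp
    fix R assume R: "R \<subseteq> V \<and> card R = k"
    have "f R = upm (int l - 1) g R" using g R by blast
    also have "\<dots> = (\<Sum>S\<in>{S. S \<subseteq> R \<and> int (card S) = int l - 1}. restrict g D S)"
      unfolding upm_def by (rule sum.cong) (use R in \<open>auto simp: D_def\<close>)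
    finally show "f R = (\<Sum>S\<in>{S. S \<subseteq> R \<and> int (card S) = int l - 1}. restrict g D S)" .
  qed
  have un: "h2 = restrict g D" if "P h2" for h2
  proof -
    have "h2 S = restrict g D S" if S: "S \<in> D" for S
    proof -
      have l1: "l \<ge> 1" using S unfolding D_def by auto
      define m where "m = l - 1"
      have im: "int l - 1 = int m" using l1 m_def by simp
      define d where "d U = h2 U - restrict g D U" for U
      have "\<forall>R. R \<subseteq> V \<and> card R = k \<longrightarrow> (\<Sum>U\<in>{U. U \<subseteq> R \<and> card U = m}. d U) = 0"
      proof (intro allI impI)
        fix R assume R: "R \<subseteq> V \<and> card R = k"
        have "f R = (\<Sum>S\<in>{S. S \<subseteq> R \<and> int (card S) = int l - 1}. h2 S)" using \<open>P h2\<close> R unfolding P_def by blast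
        moreover have "f R = (\<Sum>S\<in>{S. S \<subseteq> R \<and> int (card S) = int l - 1}. restrict g D S)" using ex R unfolding P_def by blast
        ultimately show "(\<Sum>U\<in>{U. U \<subseteq> R \<and> card U = m}. d U) = 0"
          unfolding d_def sum_subtractf im by simp
      qed
      moreover have "m \<le> k" "m + k \<le> card V" using lk cV m_def by auto
      ultimately have "\<forall>U. U \<subseteq> V \<and> card U = m \<longrightarrow> d U = 0" using inj_all V by blast
      moreover have "S \<subseteq> V" "card S = m" using S im unfolding D_def by auto
      ultimately show ?thesis unfolding d_def by simp
    qed
    moreover have "h2 \<in> extensional D" using that unfolding P_def by blast
    ultimately show ?thesis by (intro extensionalityI[of h2 D]) auto
  qed
  show "\<exists>!h. h \<in> extensional {S. S \<subseteq> V \<and> int (card S) = int l - 1} \<and>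
       (\<forall>R. R \<subseteq> V \<and> card R = k \<longrightarrow>
          f R = (\<Sum>S\<in>{S. S \<subseteq> R \<and> int (card S) = int l - 1}. h S))"
  proof -
    have "\<exists>!h. P h"
    proof (rule ex1I[of P "restrict g D"])
      show "P (restrict g D)" by (rule ex)
    next
      fix h assume "P h" thus "h = restrict g D" by (rule un)
    qed
    thus ?thesis unfolding P_def D_def .
  qed
next
  note V = assms(1) and cV = assms(2) and lk = assms(3)
  assume "\<exists>!h. h \<in> extensional {S. S \<subseteq> V \<and> int (card S) = int l - 1} \<and>
       (\<forall>R. R \<subseteq> V \<and> card R = k \<longrightarrow>
          f R = (\<Sum>S\<in>{S. S \<subseteq> R \<and> int (card S) = int l - 1}. h S))"
  then obtain h where h: "\<forall>R. R \<subseteq> V \<and> card R = k \<longrightarrow> f R = upm (int l - 1) h R"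
    unfolding upm_def by blast
  show "\<forall>r. l \<le> r \<and> r \<le> k \<longrightarrow> level_weight V k r f = 0"
  proof (intro allI impI)
    fix r assume r: "l \<le> r \<and> r \<le> k"
    have "\<forall>xs\<in>perms2 V r. sgn_sum V k r f xs = 0"
    proof
      fix xs assume xs: "xs \<in> perms2 V r"
      have "sgn_sum V k r f xs = (\<Sum>R\<in>admissible V k r xs. (-1) ^ card (R \<inter> bset r xs) * upm (int l - 1) h R)"
        unfolding sgn_sum_def by (rule sum.cong[OF refl]) (use h in \<open>auto simp: admissible_def\<close>)
      also have "\<dots> = 0" using orth[OF V xs, of "int l - 1"] r by simp
      finally show "sgn_sum V k r f xs = 0" .
    qed
    thus "level_weight V k r f = 0" using lw0[OF V] by blast
  qed
qed

end
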